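(* Let $P$ and $U$ be finite sets of points in $\mathbb{R}^d$ with $|P|=n_{\mathrm p}$, $|U|=n_{\mathrm u}$, let $\pi\in(0,1)$, $w_{\mathrm p}=\pi/n_{\mathrm p}$, $w_{\mathrm u}=1/n_{\mathrm u}$, and let $P'\subseteq P$, $U'\subseteq U$, not both empty. Let $W_{\mathrm p}=|P'|w_{\mathrm p}$, $W_{\mathrm n}=|U'|w_{\mathrm u}-|P'|w_{\mathrm p}$ and $v^*=\frac{W_{\mathrm p}}{W_{\mathrm p}+W_{\mathrm n}}$ (with $v^*=+\infty$ if $W_{\mathrm p}+W_{\mathrm n}=0$). For a loss $\ell$ define $$\hat R_{\mathrm{uPU}}(v;P',U')=\sum_{\mathbf{x}\in P'}w_{\mathrm p}\ell(v,+1)-\sum_{\mathbf{x}\in P'}w_{\mathrm p}\ell(v,-1)+\sum_{\mathbf{x}\in U'}w_{\mathrm u}\ell(v,-1),$$ $$\hat R_{\mathrm{nnPU}}(v;P',U')=\sum_{\mathbf{x}\in P'}w_{\mathrm p}\ell(v,+1)+\max\Bigl\{0,\sum_{\mathbf{x}\in U'}w_{\mathrm u}\ell(v,-1)-\sum_{\mathbf{x}\in P'}w_{\mathrm p}\ell(v,-1)\Bigr\}.$$ Suppose $\ell$ is any of the quadratic loss $(1-vy)^2$, the logistic loss $\ln(1+\exp(-vy))$, the savage loss $4/(1+\exp(vy))^2$, or the sigmoid loss $1/(1+\exp(vy))$. Then, for both $\hat R=\hat R_{\mathrm{uPU}}$ and $\hat R=\hat R_{\mathrm{nnPU}}$, the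 prediction $2\,\mathbb{1}(v^*>0.5)-1$ minimizes $\hat R(v;P',U')$ over $v\in\{-1,+1\}$.
   Context: $\mathbb{1}(\cdot)$ is the indicator function. The quantity $v^*$ is an estimate of the proportion of positive examples at a decision-tree node containing positive examples $P'$ and unlabeled examples $U'$. *)

theory Defs
  imports "HOL-Analysis.Analysis"
begin

definition quad_loss :: "real \<Rightarrow> real \<Rightarrow> real" where
  "quad_loss v y = (1 - v * y)^2"
definition logistic_loss :: "real \<Rightarrow> real \<Rightarrow> real" where
  "logistic_loss v y = ln (1 + exp (- (v * y)))"
definition savage_loss :: "real \<Rightarrow> real \<Rightarrow> real" where
  "savage_loss v y = 4 / (1 + exp (v * y))^2"
definition sigmoid_loss :: "real \<Rightarrow> real \<Rightarrow> real" where
  "sigmoid_loss v y = 1 / (1 + exp (v * y))"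

definition uPU_risk :: "(real \<Rightarrow> real \<Rightarrow> real) \<Rightarrow> real \<Rightarrow> real \<Rightarrow> 'a set \<Rightarrow> 'a set \<Rightarrow> real \<Rightarrow> real" where
  "uPU_risk l wp wu P' U' v =
     (\<Sum>x\<in>P'. wp * l v 1) - (\<Sum>x\<in>P'. wp * l v (-1)) + (\<Sum>x\<in>U'. wu * l v (-1))"

definition nnPU_risk :: "(real \<Rightarrow> real \<Rightarrow> real) \<Rightarrow> real \<Rightarrow> real \<Rightarrow> 'a set \<Rightarrow> 'a set \<Rightarrow> real \<Rightarrow> real" where
  "nnPU_risk l wp wu P' U' v =
     (\<Sum>x\<in>P'. wp * l v 1) + max 0 ((\<Sum>x\<in>U'. wu * l v (-1)) - (\<Sum>x\<in>P'. wp * l v (-1)))"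

definition vstar :: "real \<Rightarrow> real \<Rightarrow> 'a set \<Rightarrow> 'a set \<Rightarrow> ereal" where
  "vstar wp wu P' U' =
     (let Wp = real (card P') * wp; Wn = real (card U') * wu - real (card P') * wp
      in if Wp + Wn = 0 then \<infinity> else ereal (Wp / (Wp + Wn)))"

end

theory Submission
  imports Defs
begin

lemma core:
  fixes l :: "real \<Rightarrow> real \<Rightarrow> real" and P' U' :: "'a set" and A B wp wu :: real
  assumes lA1: "l 1 1 = A" and lA2: "l (-1) (-1) = A"
    and lB1: "l 1 (-1) = B" and lB2: "l (-1) 1 = B"
    and AB: "0 \<le> A" "A \<le> B" and wp: "0 \<le> wp" and wu: "0 \<le> wu"
  shows "let pred = 2 * of_bool (vstar wp wu P' U' > ereal (1/2)) - 1
         in \<forall>v \<in> {-1, 1::real}.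
              uPU_risk l wp wu P' U' pred \<le> uPU_risk l wp wu P' U' v \<and>
              nnPU_risk l wp wu P' U' pred \<le> nnPU_risk l wp wu P' U' v"
proof -
  define a where "a = real (card P') * wp"
  define b where "b = real (card U') * wu"
  have a0: "0 \<le> a" and b0: "0 \<le> b" using wp wu by (auto simp: a_def b_def)
  have u1: "uPU_risk l wp wu P' U' 1 = a*A - a*B + b*B"
    by (simp add: uPU_risk_def a_def b_def lA1 lB1 algebra_simps)
  have u2: "uPU_risk l wp wu P' U' (-1) = a*B - a*A + b*A"
    by (simp add: uPU_risk_def a_def b_def lA2 lB2 algebra_simps)
  have n1: "nnPU_risk l wp wu P' U' 1 = a*A + max 0 (b*B - a*B)"
    by (simp add: nnPU_risk_def a_def b_def lA1 lB1 algebra_simps)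
  have n2: "nnPU_risk l wp wu P' U' (-1) = a*B + max 0 (b*A - a*A)"
    by (simp add: nnPU_risk_def a_def b_def lA2 lB2 algebra_simps)
  have vs: "vstar wp wu P' U' = (if b = 0 then \<infinity> else ereal (a / b))"
    by (simp add: vstar_def a_def b_def Let_def)
  have key: "(B - A) * (b - 2*a) \<ge> 0 \<or> (B - A) * (b - 2*a) \<le> 0" by linarith
  show ?thesis
  proof (cases "vstar wp wu P' U' > ereal (1/2)")
    case True
    then have "b = 0 \<or> (b > 0 \<and> a / b > 1/2)" using vs b0 by (auto split: if_splits)
    then have h: "2*a \<ge> b" using b0 a0 by (auto simp: field_simps)
    have m: "(B - A) * (b - 2*a) \<le> 0" using h AB by (simp add: mult_nonneg_nonpos)
    have "a*A + max 0 (b*B - a*B) \<le> a*B + max 0 (b*A - a*A)"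
    proof (cases "b \<ge> a")
      case True
      then have "max 0 (b*B - a*B) = b*B - a*B" "max 0 (b*A - a*A) = b*A - a*A"
        using AB by (auto intro!: max_absorb2 mult_right_mono simp: left_diff_distrib[symmetric])
      then show ?thesis using m by (simp add: algebra_simps)
    next
      case False
      then have "max 0 (b*B - a*B) = 0" "max 0 (b*A - a*A) = 0"
        using AB by (auto simp: left_diff_distrib[symmetric] mult_nonpos_nonneg)
      then show ?thesis using AB a0 by (simp add: mult_left_mono)
    qed
    then show ?thesis using True u1 u2 n1 n2 m by (auto simp: algebra_simps)
  next
    case False
    then have "b \<noteq> 0 \<and> a / b \<le> 1/2" using vs by (auto split: if_splits)
    then have h: "2*a \<le> b" using b0 by (auto simp: field_simps)
    have m: "(B - A) * (b - 2*a) \<ge> 0" using h AB by simp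
    have ba: "b \<ge> a" using h a0 by linarith
    then have "max 0 (b*B - a*B) = b*B - a*B" "max 0 (b*A - a*A) = b*A - a*A"
      using AB by (auto intro!: max_absorb2 simp: left_diff_distrib[symmetric])
    then have "a*B + max 0 (b*A - a*A) \<le> a*A + max 0 (b*B - a*B)"
      using m by (simp add: algebra_simps)
    then show ?thesis using False u1 u2 n1 n2 m by (auto simp: algebra_simps)
  qed
qed

theorem proposition4:
  fixes P U P' U' :: "(real ^ 'd) set" and \<pi> :: real and l :: "real \<Rightarrow> real \<Rightarrow> real"
  assumes "finite P" and "finite U" and "P \<noteq> {}" and "U \<noteq> {}"
    and "0 < \<pi>" and "\<pi> < 1"
    and "P' \<subseteq> P" and "U' \<subseteq> U" and "P' \<noteq> {} \<or> U' \<noteq> {}"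
    and "l \<in> {quad_loss, logistic_loss, savage_loss, sigmoid_loss}"
  shows "let wp = \<pi> / real (card P); wu = 1 / real (card U);
             pred = 2 * of_bool (vstar wp wu P' U' > ereal (1/2)) - 1
         in \<forall>v \<in> {-1, 1::real}.
              uPU_risk l wp wu P' U' pred \<le> uPU_risk l wp wu P' U' v \<and>
              nnPU_risk l wp wu P' U' pred \<le> nnPU_risk l wp wu P' U' v"
proof -
  have wp: "0 \<le> \<pi> / real (card P)" using assms(5) by simp
  have wu: "0 \<le> 1 / real (card U)" by simp
  have "\<exists>A B. l 1 1 = A \<and> l (-1) (-1) = A \<and> l 1 (-1) = B \<and> l (-1) 1 = B \<and> 0 \<le> A \<and> A \<le> B"
  proof -
    consider "l = quad_loss" | "l = logistic_loss" | "l = savage_loss" | "l = sigmoid_loss"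
      using assms(10) by blast
    then show ?thesis
    proof cases
      case 1 then show ?thesis by (simp add: quad_loss_def)
    next
      case 2
      have "ln (1 + exp (-1)) \<le> ln (1 + exp (1::real))" by (subst ln_le_cancel_iff) (auto simp: add_pos_pos)
      then show ?thesis using 2 by (simp add: logistic_loss_def)
    next
      case 3
      have "(1 + exp (-1::real))^2 \<le> (1 + exp 1)^2"
        by (rule power_mono) auto
      moreover have "0 < (1 + exp (1::real))^2" "0 < (1 + exp (-1::real))^2"
        by (simp_all add: add_pos_pos; smt (verit) exp_gt_zero)+
      ultimately have "4 / (1 + exp (1::real))^2 \<le> 4 / (1 + exp (-1))^2"
        by (intro divide_left_mono) auto
      then show ?thesis using 3 by (simp add: savage_loss_def)
    next
      case 4
      have "1 / (1 + exp (1::real)) \<le> 1 / (1 + exp (-1))"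
        by (intro divide_left_mono) (auto simp: add_pos_pos)
      then show ?thesis using 4 by (simp add: sigmoid_loss_def)
    qed
  qed
  then obtain A B where "l 1 1 = A" "l (-1) (-1) = A" "l 1 (-1) = B" "l (-1) 1 = B" "0 \<le> A" "A \<le> B"
    by blast
  from core[OF this wp wu, of P' U'] show ?thesis by (simp add: Let_def)
qed

end
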